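(* Let $n,p,d$ be positive integers with $n>p$, and let $P(t)$ be the $(p-1)\times(p-1)$ matrix whose $(i,j)$ entry ($1\le i,j\le p-1$) is $\sum_{k\ge0}\binom{p-i}{k}\binom{n-1-j}{k}t^k$. Then $$\frac{\det(P(t^{d-1}))}{t^{(d-1)\binom{p-1}{2}}}\frac{(1-t^d)^p(1-t^{d-1})^{n-p}}{(1-t)^n}=\left(\sum_{k=0}^{p-1}\binom{n-p-1+k}{k}t^{k(d-1)}\right)\frac{(1-t^d)^p(1-t^{d-1})^{n-p}}{(1-t)^n}.$$ In particular, the Hilbert series $H$ of a generic determinantal ideal with parameters $(n,p,d)$ equals the right-hand side.
   Context: The left-hand side is the Hilbert series of $K[x_1,\dots,x_n]/I$ for a generic determinantal ideal $I$: the ideal generated by $p$ generic polynomials of degree $d$ in $K[x_1,\dots,x_n]$ together with the maximal minors of a $p\times(n-1)$ matrix of generic polynomials of degree $d-1$. *)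

theory Defs
  imports Complex_Main "Jordan_Normal_Form.Determinant"
begin

text \<open>The (p-1) x (p-1) matrix P(t); Isabelle indices i,j are 0-based, so
  entry (i,j) here is the paper's entry (i+1,j+1):
  sum over k of binom(p-(i+1),k) * binom(n-1-(j+1),k) * t^k.
  The sum over k >= 0 is finite since binom(p-(i+1),k) = 0 for k > p.\<close>
definition Pmat :: "nat \<Rightarrow> nat \<Rightarrow> real \<Rightarrow> real mat" where
  "Pmat n p t = mat (p - 1) (p - 1)
     (\<lambda>(i, j). \<Sum>k\<le>p. real ((p - (i + 1)) choose k) * real ((n - 1 - (j + 1)) choose k) * t ^ k)"

end

theory Submission
  imports Defs "HOL-Computational_Algebra.Formal_Power_Series"
begin

lemma zid:
  assumes "0 < q"
  shows "(\<Sum>j\<le>Suc r. (-1)^j * real ((q - 1 + j) choose j) * real (q choose (Suc r - j))) = 0"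
proof -
  have "(\<Sum>k=0..Suc r. ((- real q) gchoose k) * (real q gchoose (Suc r - k))) = (- real q + real q) gchoose Suc r"
    by (rule gbinomial_Vandermonde)
  also have "\<dots> = 0" by simp
  finally have *: "(\<Sum>k=0..Suc r. ((- real q) gchoose k) * (real q gchoose (Suc r - k))) = 0" .
  have "((- real q) gchoose k) = (-1)^k * real ((q - 1 + k) choose k)" for k
  proof -
    have "real q + real k - 1 = real (q - 1 + k)" using assms by simp
    then show ?thesis by (simp add: gbinomial_minus binomial_gbinomial)
  qed
  with * show ?thesis by (simp add: atLeast0AtMost binomial_gbinomial)
qed

lemma l1:
  fixes s :: real
  shows "(\<Sum>k<Suc R. real (Suc a choose k) * real (b choose k) * s^k)
     = (\<Sum>c<R. real (a choose c) * (real (b choose c) * s^c + real (b choose Suc c) * s^Suc c))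
       + real (a choose R) * real (b choose R) * s^R"
proof (induction R)
  case 0
  then show ?case by simp
next
  case (Suc R)
  show ?case
    using Suc.IH by (simp add: algebra_simps)
qed

lemma sum_if_le:
  fixes g :: "nat \<Rightarrow> real"
  assumes "\<And>e. m \<le> e \<Longrightarrow> e \<le> r \<Longrightarrow> g e = 0"
  shows "(\<Sum>e<m. if e \<le> r then g e else 0) = (\<Sum>e\<le>r. g e)"
proof -
  have ee: "{e\<in>{..<m}. e \<le> r} = {..<m} \<inter> {..r}" by auto
  have "(\<Sum>e<m. if e \<le> r then g e else 0) = (\<Sum>e\<in>{e\<in>{..<m}. e \<le> r}. g e)"
    by (rule sum.inter_filter[symmetric]) simp
  also have "\<dots> = (\<Sum>e\<le>r. g e)"
    unfolding ee
    by (rule sum.mono_neutral_left) (use assms not_less in blast)+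
  finally show ?thesis .
qed

lemma l2:
  fixes s :: real
  assumes "c < m" "j < m"
  shows "(\<Sum>e<m. ((if e \<le> c then real (q choose (c - e)) else 0)
            + s * (if e \<le> Suc c then real (q choose (Suc c - e)) else 0)) * real (j choose e))
     = real ((q + j) choose c) + s * real ((q + j) choose Suc c)"
proof -
  have a: "(\<Sum>e<m. (if e \<le> c then real (q choose (c - e)) * real (j choose e) else 0))
       = real ((q + j) choose c)"
  proof -
    have "(\<Sum>e<m. (if e \<le> c then real (q choose (c - e)) * real (j choose e) else 0))
        = (\<Sum>e\<le>c. real (q choose (c - e)) * real (j choose e))"
      by (rule sum_if_le) (use assms in auto)
    also have "\<dots> = real (\<Sum>e\<le>c. (j choose e) * (q choose (c - e)))" by (simp add: mult.commute)
    also have "\<dots> = real ((q + j) choose c)" by (simp add: vandermonde add.commute)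
    finally show ?thesis .
  qed
  have b: "(\<Sum>e<m. (if e \<le> Suc c then real (q choose (Suc c - e)) * real (j choose e) else 0))
       = real ((q + j) choose Suc c)"
  proof -
    have "(\<Sum>e<m. (if e \<le> Suc c then real (q choose (Suc c - e)) * real (j choose e) else 0))
        = (\<Sum>e\<le>Suc c. real (q choose (Suc c - e)) * real (j choose e))"
      by (rule sum_if_le) (use assms in auto)
    also have "\<dots> = real (\<Sum>e\<le>Suc c. (j choose e) * (q choose (Suc c - e)))" by (simp add: mult.commute)
    also have "\<dots> = real ((q + j) choose Suc c)" by (simp add: vandermonde add.commute)
    finally show ?thesis .
  qed
  have "(\<Sum>e<m. ((if e \<le> c then real (q choose (c - e)) else 0)
            + s * (if e \<le> Suc c then real (q choose (Suc c - e)) else 0)) * real (j choose e))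
      = (\<Sum>e<m. (if e \<le> c then real (q choose (c - e)) * real (j choose e) else 0))
        + s * (\<Sum>e<m. (if e \<le> Suc c then real (q choose (Suc c - e)) * real (j choose e) else 0))"
    by (auto simp add: sum_distrib_left sum.distrib[symmetric] algebra_simps intro!: sum.cong)
  with a b show ?thesis by simp
qed

definition zz :: "nat \<Rightarrow> nat \<Rightarrow> nat \<Rightarrow> real" where
  "zz m q l = (-1)^(m - l + 1) * real ((q - 1 + (m - l)) choose (m - l))"

lemma zsum:
  assumes "0 < q" "e < m"
  shows "(\<Sum>l<m. zz m q l * (if e \<le> l then real (q choose (l - e)) else 0)) = real (q choose (m - e))"
proof -
  define r where "r = m - e - 1"
  have mr: "m - e = Suc r" using assms unfolding r_def by simp
  have "(\<Sum>l<m. zz m q l * (if e \<le> l then real (q choose (l - e)) else 0))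
      = (\<Sum>i<m. zz m q (m - Suc i) * (if e \<le> m - Suc i then real (q choose (m - Suc i - e)) else 0))"
    by (rule sum.nat_diff_reindex[symmetric])
  also have "\<dots> = (\<Sum>i<m. if i \<le> r then - ((-1)^(Suc i) * real ((q - 1 + Suc i) choose Suc i) * real (q choose (r - i))) else 0)"
  proof (rule sum.cong)
    fix i assume "i \<in> {..<m}"
    then have im: "i < m" by simp
    have a: "m - (m - Suc i) = Suc i" using im by simp
    have b: "(e \<le> m - Suc i) = (i \<le> r)" using im assms unfolding r_def by auto
    have c: "m - Suc i - e = r - i" unfolding r_def by simp
    show "zz m q (m - Suc i) * (if e \<le> m - Suc i then real (q choose (m - Suc i - e)) else 0)
      = (if i \<le> r then - ((-1)^(Suc i) * real ((q - 1 + Suc i) choose Suc i) * real (q choose (r - i))) else 0)"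
      unfolding zz_def a b c by simp
  qed simp
  also have "\<dots> = (\<Sum>i\<le>r. - ((-1)^(Suc i) * real ((q - 1 + Suc i) choose Suc i) * real (q choose (r - i))))"
    by (rule sum_if_le) (use mr in auto)
  also have "\<dots> = real (q choose Suc r)"
  proof -
    define G where "G j = (-1)^j * real ((q - 1 + j) choose j) * real (q choose (Suc r - j))" for j
    have "(\<Sum>j\<le>Suc r. G j) = 0"
      unfolding G_def by (rule zid[OF assms(1)])
    moreover have "(\<Sum>j\<le>Suc r. G j) = G 0 + (\<Sum>i\<le>r. G (Suc i))"
      by (rule sum.atMost_Suc_shift)
    moreover have "G 0 = real (q choose Suc r)" unfolding G_def by simp
    moreover have "(\<Sum>i\<le>r. G (Suc i)) = (\<Sum>i\<le>r. (-1)^(Suc i) * real ((q - 1 + Suc i) choose Suc i) * real (q choose (r - i)))"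
      unfolding G_def by (simp only: diff_Suc_Suc)
    ultimately have "real (q choose Suc r) + (\<Sum>i\<le>r. (-1)^(Suc i) * real ((q - 1 + Suc i) choose Suc i) * real (q choose (r - i))) = 0"
      by simp
    then show ?thesis by (simp add: sum_negf)
  qed
  finally show ?thesis using mr by simp
qed

lemma finsum:
  fixes s :: real
  shows "1 + s * (\<Sum>l<m. zz m q l * (-s)^(m - 1 - l)) = (\<Sum>k\<le>m. real ((q - 1 + k) choose k) * s^k)"
proof -
  have "(\<Sum>l<m. zz m q l * (-s)^(m - 1 - l)) = (\<Sum>i<m. zz m q (m - Suc i) * (-s)^(m - 1 - (m - Suc i)))"
    by (rule sum.nat_diff_reindex[symmetric])
  also have "\<dots> = (\<Sum>i<m. real ((q - 1 + Suc i) choose Suc i) * s^i)"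
  proof (rule sum.cong)
    fix i assume "i \<in> {..<m}"
    then have im: "i < m" by simp
    have a: "m - (m - Suc i) = Suc i" using im by simp
    have c: "m - 1 - (m - Suc i) = i" using im by simp
    have d: "(-1::real)^(Suc i + 1) * (-s)^i = s^i"
    proof -
      have "(-1::real)^(Suc i + 1) = (-1)^i" by simp
      moreover have "(-1::real)^i * (-s)^i = s^i" by (simp add: power_mult_distrib[symmetric])
      ultimately show ?thesis by simp
    qed
    show "zz m q (m - Suc i) * (-s)^(m - 1 - (m - Suc i)) = real ((q - 1 + Suc i) choose Suc i) * s^i"
      unfolding zz_def a c d[symmetric] by (simp only: mult_ac)
  qed simp
  finally have *: "(\<Sum>l<m. zz m q l * (-s)^(m - 1 - l)) = (\<Sum>i<m. real ((q - 1 + Suc i) choose Suc i) * s^i)" .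
  have "(\<Sum>k\<le>m. real ((q - 1 + k) choose k) * s^k) = (\<Sum>k<Suc m. real ((q - 1 + k) choose k) * s^k)"
    by (simp add: lessThan_Suc_atMost)
  also have "\<dots> = 1 + (\<Sum>i<m. real ((q - 1 + Suc i) choose Suc i) * s^Suc i)"
    by (subst sum.lessThan_Suc_shift) (simp del: binomial_Suc_Suc add_Suc_right sum.lessThan_Suc power_Suc)
  finally show ?thesis unfolding * by (simp add: sum_distrib_left algebra_simps)
qed

lemma multE:
  assumes "A \<in> carrier_mat m m" "B \<in> carrier_mat m m" "i < m" "j < m"
  shows "(A * B) $$ (i, j) = (\<Sum>l<m. A $$ (i, l) * B $$ (l, j))"
  using assms by (simp add: scalar_prod_def lessThan_atLeast0)

lemma prod_diag:
  assumes "A \<in> carrier_mat m m"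
  shows "prod_list (diag_mat A) = (\<Prod>i<m. A $$ (i, i))"
  using assms by (simp add: diag_mat_def prod.distinct_set_conv_list[symmetric] lessThan_atLeast0)

lemma det_lower_unit:
  fixes A :: "real mat"
  assumes "A \<in> carrier_mat m m" "\<And>i j. i < j \<Longrightarrow> j < m \<Longrightarrow> A $$ (i, j) = 0"
    "\<And>i. i < m \<Longrightarrow> A $$ (i, i) = 1"
  shows "det A = 1"
  using det_lower_triangular[OF assms(2) assms(1)] prod_diag[OF assms(1)] assms(3) by simp

lemma det_upper_unit:
  fixes A :: "real mat"
  assumes "A \<in> carrier_mat m m" "\<And>i j. j < i \<Longrightarrow> i < m \<Longrightarrow> A $$ (i, j) = 0"
    "\<And>i. i < m \<Longrightarrow> A $$ (i, i) = 1"
  shows "det A = 1"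
proof -
  have "upper_triangular A" using assms(1,2) unfolding upper_triangular_def by auto
  then show ?thesis using det_upper_triangular[OF _ assms(1)] prod_diag[OF assms(1)] assms(3) by simp
qed

lemma sum_J:
  fixes X :: "nat \<Rightarrow> real"
  assumes "i < m"
  shows "(\<Sum>l<m. (if i + l = m - 1 then 1 else 0) * X l) = X (m - 1 - i)"
proof -
  have "(\<Sum>l<m. (if i + l = m - 1 then 1 else 0) * X l) = (\<Sum>l<m. if l = m - 1 - i then X l else 0)"
    by (rule sum.cong) (use assms in auto)
  also have "\<dots> = X (m - 1 - i)" using assms by (simp add: sum.delta')
  finally show ?thesis .
qed

lemma sum_J':
  fixes X :: "nat \<Rightarrow> real"
  assumes "j < m"
  shows "(\<Sum>l<m. X l * (if l + j = m - 1 then 1 else 0)) = X (m - 1 - j)"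
proof -
  have "(\<Sum>l<m. X l * (if l + j = m - 1 then 1 else 0)) = (\<Sum>l<m. if l = m - 1 - j then X l else 0)"
    by (rule sum.cong) (use assms in auto)
  also have "\<dots> = X (m - 1 - j)" using assms by (simp add: sum.delta')
  finally show ?thesis .
qed

definition Jm :: "nat \<Rightarrow> real mat" where
  "Jm m = mat m m (\<lambda>(i, j). if i + j = m - 1 then 1 else 0)"
definition Ap :: "nat \<Rightarrow> nat \<Rightarrow> real \<Rightarrow> real mat" where
  "Ap m q s = mat m m (\<lambda>(i, j). \<Sum>k\<le>Suc m. real (Suc i choose k) * real ((q + j) choose k) * s ^ k)"
definition Pas :: "nat \<Rightarrow> real mat" where
  "Pas m = mat m m (\<lambda>(i, j). real (i choose j))"
definition PasT :: "nat \<Rightarrow> real mat" where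
  "PasT m = mat m m (\<lambda>(i, j). real (j choose i))"
definition Bm :: "nat \<Rightarrow> nat \<Rightarrow> real \<Rightarrow> real mat" where
  "Bm m q s = mat m m (\<lambda>(c, j). real ((q + j) choose c) * s ^ c + real ((q + j) choose Suc c) * s ^ Suc c)"
definition Mx :: "nat \<Rightarrow> real \<Rightarrow> nat \<Rightarrow> nat \<Rightarrow> real" where
  "Mx q s c e = (if e \<le> c then real (q choose (c - e)) else 0)
            + s * (if e \<le> Suc c then real (q choose (Suc c - e)) else 0)"
definition Bp :: "nat \<Rightarrow> nat \<Rightarrow> real \<Rightarrow> real mat" where
  "Bp m q s = mat m m (\<lambda>(c, e). s ^ c * Mx q s c e)"
definition Dm :: "nat \<Rightarrow> real \<Rightarrow> real mat" where
  "Dm m s = mat m m (\<lambda>(i, j). if i = j then s ^ i else 0)"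
definition Mm :: "nat \<Rightarrow> nat \<Rightarrow> real \<Rightarrow> real mat" where
  "Mm m q s = mat m m (\<lambda>(c, e). Mx q s c e)"
definition Tm :: "nat \<Rightarrow> nat \<Rightarrow> real mat" where
  "Tm m q = mat m m (\<lambda>(l, e). if e \<le> l then real (q choose (l - e)) else 0)"
definition Nm :: "nat \<Rightarrow> nat \<Rightarrow> real \<Rightarrow> real mat" where
  "Nm m q s = mat m m (\<lambda>(c, l). (if l = c then 1 else 0) + (if l = Suc c then s else 0)
      + (if c = m - 1 then s * zz m q l else 0))"
definition Wm :: "nat \<Rightarrow> real \<Rightarrow> real mat" where
  "Wm m s = mat m m (\<lambda>(l, e). if l \<le> e then (-s) ^ (e - l) else 0)"

lemma F0:
  assumes "0 < p" "p < n"
  shows "Pmat n p s = Jm (p - 1) * Ap (p - 1) (n - p) s * Jm (p - 1)"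
proof (rule eq_matI)
  let ?m = "p - 1"
  fix i j assume i: "i < dim_row (Jm ?m * Ap ?m (n - p) s * Jm ?m)" and j: "j < dim_col (Jm ?m * Ap ?m (n - p) s * Jm ?m)"
  then have i: "i < ?m" and j: "j < ?m" by (auto simp: Jm_def)
  have c: "Jm ?m \<in> carrier_mat ?m ?m" "Ap ?m (n - p) s \<in> carrier_mat ?m ?m" by (auto simp: Jm_def Ap_def)
  have "(Jm ?m * Ap ?m (n - p) s * Jm ?m) $$ (i, j) = (\<Sum>l<?m. (Jm ?m * Ap ?m (n - p) s) $$ (i, l) * Jm ?m $$ (l, j))"
    by (rule multE[OF mult_carrier_mat[OF c] c(1) i j])
  also have "\<dots> = (\<Sum>l<?m. (Jm ?m * Ap ?m (n - p) s) $$ (i, l) * (if l + j = ?m - 1 then 1 else 0))"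
    by (rule sum.cong) (use j in \<open>auto simp: Jm_def\<close>)
  also have "\<dots> = (Jm ?m * Ap ?m (n - p) s) $$ (i, ?m - 1 - j)"
    by (rule sum_J'[OF j])
  also have "\<dots> = (\<Sum>l<?m. Jm ?m $$ (i, l) * Ap ?m (n - p) s $$ (l, ?m - 1 - j))"
    by (rule multE[OF c]) (use i j in auto)
  also have "\<dots> = (\<Sum>l<?m. (if i + l = ?m - 1 then 1 else 0) * Ap ?m (n - p) s $$ (l, ?m - 1 - j))"
    by (rule sum.cong) (use i in \<open>auto simp: Jm_def\<close>)
  also have "\<dots> = Ap ?m (n - p) s $$ (?m - 1 - i, ?m - 1 - j)"
    by (rule sum_J[OF i])
  also have "\<dots> = Pmat n p s $$ (i, j)"
  proof -
    have a: "Suc (p - Suc (Suc i)) = p - Suc i" using i by simp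
    have b: "n - p + p = n" using assms by simp
    have d: "Suc ?m = p" using assms by simp
    show ?thesis using i j unfolding Ap_def Pmat_def by (simp add: a b d)
  qed
  finally show "Pmat n p s $$ (i, j) = (Jm ?m * Ap ?m (n - p) s * Jm ?m) $$ (i, j)" by simp
qed (auto simp: Pmat_def Jm_def)

lemma JJ: "Jm m * Jm m = 1\<^sub>m m"
proof (rule eq_matI)
  fix i j assume "i < dim_row (1\<^sub>m m)" "j < dim_col (1\<^sub>m m)"
  then have i: "i < m" and j: "j < m" by auto
  have c: "Jm m \<in> carrier_mat m m" by (simp add: Jm_def)
  have "(Jm m * Jm m) $$ (i, j) = (\<Sum>l<m. (if i + l = m - 1 then 1 else 0) * (if l + j = m - 1 then 1 else 0))"
    using i j by (subst multE[OF c c i j]) (simp_all add: Jm_def)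
  also have "\<dots> = (if (m - 1 - i) + j = m - 1 then 1 else 0)" by (rule sum_J[OF i])
  also have "\<dots> = 1\<^sub>m m $$ (i, j)" using i j by auto
  finally show "(Jm m * Jm m) $$ (i, j) = 1\<^sub>m m $$ (i, j)" by simp
qed (auto simp: Jm_def)

lemma F1:
  shows "Ap m q s = Pas m * Bm m q s"
proof (rule eq_matI)
  fix i j assume "i < dim_row (Pas m * Bm m q s)" "j < dim_col (Pas m * Bm m q s)"
  then have i: "i < m" and j: "j < m" by (auto simp: Pas_def Bm_def)
  have c: "Pas m \<in> carrier_mat m m" "Bm m q s \<in> carrier_mat m m" by (auto simp: Pas_def Bm_def)
  have "(Pas m * Bm m q s) $$ (i, j) = (\<Sum>c<m. real (i choose c) * (real ((q + j) choose c) * s ^ c + real ((q + j) choose Suc c) * s ^ Suc c))"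
    using i j by (subst multE[OF c i j]) (simp_all add: Pas_def Bm_def)
  also have "\<dots> = (\<Sum>c<Suc m. real (i choose c) * (real ((q + j) choose c) * s ^ c + real ((q + j) choose Suc c) * s ^ Suc c))
       + real (i choose Suc m) * real ((q + j) choose Suc m) * s ^ Suc m"
    using i by (simp add: binomial_eq_0)
  also have "\<dots> = (\<Sum>k<Suc (Suc m). real (Suc i choose k) * real ((q + j) choose k) * s ^ k)"
    by (rule l1[symmetric])
  also have "\<dots> = Ap m q s $$ (i, j)"
    using i j by (simp add: Ap_def lessThan_Suc_atMost)
  finally show "Ap m q s $$ (i, j) = (Pas m * Bm m q s) $$ (i, j)" by simp
qed (auto simp: Ap_def Pas_def Bm_def)

lemma F2:
  shows "Bm m q s = Bp m q s * PasT m"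
proof (rule eq_matI)
  fix c j assume "c < dim_row (Bp m q s * PasT m)" "j < dim_col (Bp m q s * PasT m)"
  then have c: "c < m" and j: "j < m" by (auto simp: Bp_def PasT_def)
  have cc: "Bp m q s \<in> carrier_mat m m" "PasT m \<in> carrier_mat m m" by (auto simp: Bp_def PasT_def)
  have "(Bp m q s * PasT m) $$ (c, j) = (\<Sum>e<m. s ^ c * Mx q s c e * real (j choose e))"
    using c j by (subst multE[OF cc c j]) (simp_all add: Bp_def PasT_def)
  also have "\<dots> = s ^ c * (\<Sum>e<m. Mx q s c e * real (j choose e))"
    by (simp add: sum_distrib_left mult.assoc)
  also have "\<dots> = s ^ c * (real ((q + j) choose c) + s * real ((q + j) choose Suc c))"
    unfolding Mx_def using l2[OF c j] by simp
  also have "\<dots> = Bm m q s $$ (c, j)"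
    using c j by (simp add: Bm_def algebra_simps)
  finally show "Bm m q s $$ (c, j) = (Bp m q s * PasT m) $$ (c, j)" by simp
qed (auto simp: Bp_def PasT_def Bm_def)

lemma F3:
  shows "Bp m q s = Dm m s * Mm m q s"
proof (rule eq_matI)
  fix c j assume "c < dim_row (Dm m s * Mm m q s)" "j < dim_col (Dm m s * Mm m q s)"
  then have c: "c < m" and j: "j < m" by (auto simp: Dm_def Mm_def)
  have cc: "Dm m s \<in> carrier_mat m m" "Mm m q s \<in> carrier_mat m m" by (auto simp: Dm_def Mm_def)
  have "(Dm m s * Mm m q s) $$ (c, j) = (\<Sum>l<m. (if c = l then s ^ c else 0) * Mx q s l j)"
    using c j by (subst multE[OF cc c j]) (simp_all add: Dm_def Mm_def)
  also have "\<dots> = (\<Sum>l<m. if l = c then s ^ c * Mx q s l j else 0)"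
    by (rule sum.cong) auto
  also have "\<dots> = Bp m q s $$ (c, j)"
    using c j by (simp add: Bp_def sum.delta')
  finally show "Bp m q s $$ (c, j) = (Dm m s * Mm m q s) $$ (c, j)" by simp
qed (auto simp: Bp_def Dm_def Mm_def)

lemma NmE:
  fixes X :: "real mat"
  assumes X: "X \<in> carrier_mat m m" and c: "c < m" and e: "e < m"
  shows "(Nm m q s * X) $$ (c, e) = X $$ (c, e) + (if Suc c < m then s * X $$ (Suc c, e) else 0)
      + (if c = m - 1 then s * (\<Sum>l<m. zz m q l * X $$ (l, e)) else 0)"
proof -
  have cc: "Nm m q s \<in> carrier_mat m m" by (simp add: Nm_def)
  have "(Nm m q s * X) $$ (c, e) = (\<Sum>l<m. ((if l = c then 1 else 0) + (if l = Suc c then s else 0)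
      + (if c = m - 1 then s * zz m q l else 0)) * X $$ (l, e))"
    by (subst multE[OF cc X c e]) (rule sum.cong, simp_all add: Nm_def c)
  also have "\<dots> = (\<Sum>l<m. (if l = c then X $$ (l, e) else 0) + (if l = Suc c then s * X $$ (l, e) else 0)
      + (if c = m - 1 then s * (zz m q l * X $$ (l, e)) else 0))"
    by (rule sum.cong) (auto simp: algebra_simps)
  also have "\<dots> = (\<Sum>l<m. if l = c then X $$ (l, e) else 0) + (\<Sum>l<m. if l = Suc c then s * X $$ (l, e) else 0)
      + (\<Sum>l<m. (if c = m - 1 then s * (zz m q l * X $$ (l, e)) else 0))"
    by (simp only: sum.distrib)
  also have "\<dots> = X $$ (c, e) + (if Suc c < m then s * X $$ (Suc c, e) else 0)
      + (if c = m - 1 then s * (\<Sum>l<m. zz m q l * X $$ (l, e)) else 0)"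
    using c by (simp add: sum.delta' sum_distrib_left)
  finally show ?thesis .
qed

lemma F4:
  assumes "0 < q"
  shows "Mm m q s = Nm m q s * Tm m q"
proof (rule eq_matI)
  fix c e assume "c < dim_row (Nm m q s * Tm m q)" "e < dim_col (Nm m q s * Tm m q)"
  then have c: "c < m" and e: "e < m" by (auto simp: Nm_def Tm_def)
  have T: "Tm m q \<in> carrier_mat m m" by (simp add: Tm_def)
  show "Mm m q s $$ (c, e) = (Nm m q s * Tm m q) $$ (c, e)"
  proof (cases "Suc c < m")
    case True
    then show ?thesis using c e unfolding NmE[OF T c e] by (simp add: Tm_def Mm_def Mx_def)
  next
    case False
    then have cm: "c = m - 1" "Suc c = m" using c by auto
    have "(\<Sum>l<m. zz m q l * Tm m q $$ (l, e)) = (\<Sum>l<m. zz m q l * (if e \<le> l then real (q choose (l - e)) else 0))"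
      by (rule sum.cong) (auto simp: Tm_def e)
    also have "\<dots> = real (q choose (m - e))" by (rule zsum[OF assms e])
    finally have z: "(\<Sum>l<m. zz m q l * Tm m q $$ (l, e)) = real (q choose (m - e))" .
    show ?thesis using c e False cm z unfolding NmE[OF T c e] by (simp add: Tm_def Mm_def Mx_def)
  qed
qed (auto simp: Mm_def Nm_def Tm_def)

lemma F5a:
  assumes "c < e" "e < m"
  shows "(Nm m q s * Wm m s) $$ (c, e) = 0"
proof -
  have W: "Wm m s \<in> carrier_mat m m" by (simp add: Wm_def)
  have c: "c < m" using assms by simp
  have ne: "c \<noteq> m - 1" "Suc c < m" using assms by auto
  have k: "e - c = Suc (e - Suc c)" using assms by simp
  show ?thesis using assms ne unfolding NmE[OF W c assms(2)] by (simp add: Wm_def k)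
qed

lemma F5b:
  assumes "c < m"
  shows "(Nm m q s * Wm m s) $$ (c, c) = (if c = m - 1 then 1 + s * (\<Sum>l<m. zz m q l * (-s)^(m - 1 - l)) else 1)"
proof -
  have W: "Wm m s \<in> carrier_mat m m" by (simp add: Wm_def)
  have "(\<Sum>l<m. zz m q l * Wm m s $$ (l, m - 1)) = (\<Sum>l<m. zz m q l * (-s)^(m - 1 - l))"
    by (rule sum.cong) (auto simp: Wm_def)
  then show ?thesis using assms unfolding NmE[OF W assms assms] by (auto simp add: Wm_def)
qed

lemma det_Nm:
  assumes "m = Suc m'"
  shows "det (Nm m q s) = (\<Sum>k\<le>m. real ((q - 1 + k) choose k) * s^k)"
proof -
  have N: "Nm m q s \<in> carrier_mat m m" and W: "Wm m s \<in> carrier_mat m m" by (auto simp: Nm_def Wm_def)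
  have dW: "det (Wm m s) = 1" by (rule det_upper_unit[OF W]) (auto simp: Wm_def)
  have NW: "Nm m q s * Wm m s \<in> carrier_mat m m" using N W by simp
  have "det (Nm m q s * Wm m s) = prod_list (diag_mat (Nm m q s * Wm m s))"
    by (rule det_lower_triangular[OF F5a NW])
  also have "\<dots> = (\<Prod>c<m. (Nm m q s * Wm m s) $$ (c, c))" by (rule prod_diag[OF NW])
  also have "\<dots> = (\<Prod>c<m. (if c = m - 1 then 1 + s * (\<Sum>l<m. zz m q l * (-s)^(m - 1 - l)) else 1))"
    by (rule prod.cong) (auto simp: F5b)
  also have "\<dots> = 1 + s * (\<Sum>l<m. zz m q l * (-s)^(m - 1 - l))"
    using assms by (simp add: prod.lessThan_Suc)
  also have "\<dots> = (\<Sum>k\<le>m. real ((q - 1 + k) choose k) * s^k)" by (rule finsum)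
  finally show ?thesis using det_mult[OF N W] dW by simp
qed

lemma gauss_sum: "(\<Sum>i<m. i) = m choose 2"
  by (induction m) (simp_all add: numeral_2_eq_2)

lemma det_Ap:
  assumes "m = Suc m'" "0 < q"
  shows "det (Ap m q s) = s ^ (m choose 2) * (\<Sum>k\<le>m. real ((q - 1 + k) choose k) * s^k)"
proof -
  have P: "Pas m \<in> carrier_mat m m" and PT: "PasT m \<in> carrier_mat m m"
    and B: "Bm m q s \<in> carrier_mat m m" and Bp: "Bp m q s \<in> carrier_mat m m"
    and D: "Dm m s \<in> carrier_mat m m" and M: "Mm m q s \<in> carrier_mat m m"
    and N: "Nm m q s \<in> carrier_mat m m" and T: "Tm m q \<in> carrier_mat m m"
    by (auto simp: Pas_def PasT_def Bm_def Bp_def Dm_def Mm_def Nm_def Tm_def)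
  have dP: "det (Pas m) = 1" by (rule det_lower_unit[OF P]) (auto simp: Pas_def)
  have dPT: "det (PasT m) = 1" by (rule det_upper_unit[OF PT]) (auto simp: PasT_def)
  have dT: "det (Tm m q) = 1" by (rule det_lower_unit[OF T]) (auto simp: Tm_def)
  have "det (Dm m s) = prod_list (diag_mat (Dm m s))"
    by (rule det_lower_triangular[OF _ D]) (auto simp: Dm_def)
  also have "\<dots> = (\<Prod>i<m. s ^ i)" unfolding prod_diag[OF D] by (rule prod.cong) (auto simp: Dm_def)
  also have "\<dots> = s ^ (m choose 2)" by (simp add: power_sum[symmetric] gauss_sum)
  finally have dD: "det (Dm m s) = s ^ (m choose 2)" .
  have "det (Ap m q s) = det (Bm m q s)" unfolding F1 using det_mult[OF P B] dP by simp
  also have "\<dots> = det (Bp m q s)" unfolding F2 using det_mult[OF Bp PT] dPT by simp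
  also have "\<dots> = s ^ (m choose 2) * det (Mm m q s)" unfolding F3 using det_mult[OF D M] dD by simp
  also have "det (Mm m q s) = det (Nm m q s)" unfolding F4[OF assms(2)] using det_mult[OF N T] dT by simp
  finally show ?thesis using det_Nm[OF assms(1)] by simp
qed

lemma det_Pmat:
  assumes "0 < p" "p < n"
  shows "det (Pmat n p s) = s ^ ((p - 1) choose 2) * (\<Sum>k = 0..p - 1. real ((n - p - 1 + k) choose k) * s^k)"
proof (cases "p = 1")
  case True
  have "Pmat n p s = 1\<^sub>m 0" by (rule eq_matI) (auto simp: Pmat_def True)
  then show ?thesis using True by (simp add: choose_two)
next
  case False
  define m where "m = p - 1"
  have m: "m = Suc (m - 1)" using False assms unfolding m_def by simp
  have q: "0 < n - p" using assms by simp
  have J: "Jm m \<in> carrier_mat m m" and A: "Ap m (n - p) s \<in> carrier_mat m m" by (auto simp: Jm_def Ap_def)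
  have "det (Pmat n p s) = det (Jm m * Ap m (n - p) s * Jm m)" unfolding m_def by (simp add: F0[OF assms])
  also have "\<dots> = det (Ap m (n - p) s) * (det (Jm m) * det (Jm m))"
    using det_mult[OF mult_carrier_mat[OF J A] J] det_mult[OF J A] by (simp add: algebra_simps)
  also have "det (Jm m) * det (Jm m) = 1" using det_mult[OF J J] JJ by simp
  also have "det (Ap m (n - p) s) = s ^ (m choose 2) * (\<Sum>k\<le>m. real ((n - p - 1 + k) choose k) * s^k)"
    by (rule det_Ap[OF m q])
  finally show ?thesis unfolding m_def by (simp add: atMost_atLeast0)
qed

theorem corollary1:
  fixes n p d :: nat and t :: real
  assumes "0 < n" and "0 < p" and "0 < d" and "n > p"
    and "t \<noteq> 0" and "t \<noteq> 1"
  shows "det (Pmat n p (t ^ (d - 1))) / t ^ ((d - 1) * ((p - 1) choose 2))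
           * ((1 - t ^ d) ^ p * (1 - t ^ (d - 1)) ^ (n - p) / (1 - t) ^ n)
         = (\<Sum>k = 0..p - 1. real ((n - p - 1 + k) choose k) * t ^ (k * (d - 1)))
           * ((1 - t ^ d) ^ p * (1 - t ^ (d - 1)) ^ (n - p) / (1 - t) ^ n)"
proof -
  have "det (Pmat n p (t ^ (d - 1))) = (t ^ (d - 1)) ^ ((p - 1) choose 2)
      * (\<Sum>k = 0..p - 1. real ((n - p - 1 + k) choose k) * (t ^ (d - 1)) ^ k)"
    by (rule det_Pmat[OF assms(2) assms(4)])
  also have "(t ^ (d - 1)) ^ ((p - 1) choose 2) = t ^ ((d - 1) * ((p - 1) choose 2))"
    by (simp add: power_mult)
  also have "(\<Sum>k = 0..p - 1. real ((n - p - 1 + k) choose k) * (t ^ (d - 1)) ^ k)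
      = (\<Sum>k = 0..p - 1. real ((n - p - 1 + k) choose k) * t ^ (k * (d - 1)))"
    by (simp add: power_mult[symmetric] mult.commute)
  finally have "det (Pmat n p (t ^ (d - 1))) / t ^ ((d - 1) * ((p - 1) choose 2))
      = (\<Sum>k = 0..p - 1. real ((n - p - 1 + k) choose k) * t ^ (k * (d - 1)))"
    using assms(5) by simp
  then show ?thesis by simp
qed

end
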